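(* Let $g(x)\in\mathbb{Z}[x]$ and let $\{R_i\}_{i\in I}$ be a family of rings. Then $\prod_{i\in I}R_i$ is weakly $g(x)$-$r$-clean if and only if every $R_i$ is weakly $g(x)$-$r$-clean and at most one $R_i$ is not $g(x)$-$r$-clean.
   Context: Rings are associative with identity; an integer polynomial $g(x)$ is evaluated in any ring via the canonical map $\mathbb{Z}\to R$. $Reg(R)=\{r\in R: r=ryr \text{ for some } y\in R\}$. A ring $R$ is $g(x)$-$r$-clean if every $x\in R$ can be written $x=r+s$ with $r\in Reg(R)$ and $g(s)=0$. An element $x\in R$ is weakly $g(x)$-$r$-clean if $x=r+s$ or $x=r-s$ with $r\in Reg(R)$ and $g(s)=0$; $R$ is weakly $g(x)$-$r$-clean if all its elements are. *)

theory Defs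
  imports "HOL-Algebra.Ring" "HOL-Computational_Algebra.Polynomial"
begin

text \<open>Evaluation of an integer polynomial g in a ring R via the canonical map Z -> R:
  g(s) = sum_k (coeff g k) . s^k, where the integer multiple is the additive (int) power.\<close>
definition poly_eval_int :: "('a, 'b) ring_scheme \<Rightarrow> int poly \<Rightarrow> 'a \<Rightarrow> 'a" where
  "poly_eval_int R g s = (\<Oplus>\<^bsub>R\<^esub> k \<in> {..degree g}. add_pow R (coeff g k) (s [^]\<^bsub>R\<^esub> k))"

definition Reg :: "('a, 'b) ring_scheme \<Rightarrow> 'a set" where
  "Reg R = {r \<in> carrier R. \<exists>y \<in> carrier R. r = r \<otimes>\<^bsub>R\<^esub> y \<otimes>\<^bsub>R\<^esub> r}"

definition g_r_clean :: "int poly \<Rightarrow> ('a, 'b) ring_scheme \<Rightarrow> bool" where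
  "g_r_clean g R \<longleftrightarrow> (\<forall>x \<in> carrier R. \<exists>r \<in> Reg R. \<exists>s \<in> carrier R.
      poly_eval_int R g s = \<zero>\<^bsub>R\<^esub> \<and> x = r \<oplus>\<^bsub>R\<^esub> s)"

definition weakly_g_r_clean_elem :: "int poly \<Rightarrow> ('a, 'b) ring_scheme \<Rightarrow> 'a \<Rightarrow> bool" where
  "weakly_g_r_clean_elem g R x \<longleftrightarrow> (\<exists>r \<in> Reg R. \<exists>s \<in> carrier R.
      poly_eval_int R g s = \<zero>\<^bsub>R\<^esub> \<and> (x = r \<oplus>\<^bsub>R\<^esub> s \<or> x = r \<ominus>\<^bsub>R\<^esub> s))"

definition weakly_g_r_clean :: "int poly \<Rightarrow> ('a, 'b) ring_scheme \<Rightarrow> bool" where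
  "weakly_g_r_clean g R \<longleftrightarrow> (\<forall>x \<in> carrier R. weakly_g_r_clean_elem g R x)"

definition PiR :: "'i set \<Rightarrow> ('i \<Rightarrow> ('a, 'b) ring_scheme) \<Rightarrow> ('i \<Rightarrow> 'a) ring" where
  "PiR I R = \<lparr> carrier = PiE I (\<lambda>i. carrier (R i)),
               monoid.mult = (\<lambda>x y. \<lambda>i\<in>I. x i \<otimes>\<^bsub>R i\<^esub> y i),
               one = (\<lambda>i\<in>I. \<one>\<^bsub>R i\<^esub>),
               zero = (\<lambda>i\<in>I. \<zero>\<^bsub>R i\<^esub>),
               add = (\<lambda>x y. \<lambda>i\<in>I. x i \<oplus>\<^bsub>R i\<^esub> y i) \<rparr>"

end

theory Submission
  imports Defs "HOL-Algebra.RingHom"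
begin

lemma PiR_simps [simp]:
  "carrier (PiR I R) = PiE I (\<lambda>i. carrier (R i))"
  "x \<otimes>\<^bsub>PiR I R\<^esub> y = (\<lambda>i\<in>I. x i \<otimes>\<^bsub>R i\<^esub> y i)"
  "\<one>\<^bsub>PiR I R\<^esub> = (\<lambda>i\<in>I. \<one>\<^bsub>R i\<^esub>)"
  "\<zero>\<^bsub>PiR I R\<^esub> = (\<lambda>i\<in>I. \<zero>\<^bsub>R i\<^esub>)"
  "x \<oplus>\<^bsub>PiR I R\<^esub> y = (\<lambda>i\<in>I. x i \<oplus>\<^bsub>R i\<^esub> y i)"
  by (simp_all add: PiR_def)

lemma (in ring_hom_ring) hom_finsum':
  "f \<in> A \<rightarrow> carrier R \<Longrightarrow> h (finsum R f A) = finsum S (h \<circ> f) A"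
  by (induct A rule: infinite_finite_induct, auto simp: Pi_def)

lemma PiR_ring:
  assumes "\<forall>i \<in> I. ring (R i)"
  shows "ring (PiR I R)"
proof (rule ringI)
  show "abelian_group (PiR I R)"
  proof (rule abelian_groupI)
    fix x assume x: "x \<in> carrier (PiR I R)"
    show "\<exists>y \<in> carrier (PiR I R). y \<oplus>\<^bsub>PiR I R\<^esub> x = \<zero>\<^bsub>PiR I R\<^esub>"
      apply (rule bexI[where x="\<lambda>i\<in>I. \<ominus>\<^bsub>R i\<^esub> x i"])
      using x assms by (auto simp: PiE_iff ring.ring_simprules)
  qed (use assms in \<open>auto simp: PiE_iff ring.ring_simprules fun_eq_iff extensional_def\<close>)
  have M: "\<forall>i\<in>I. monoid (R i)" using assms ring.is_monoid by blast
  show "monoid (PiR I R)"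
    by (rule monoidI) (use assms M monoid.r_one monoid.l_one in \<open>auto simp: PiE_iff ring.ring_simprules fun_eq_iff extensional_def\<close>)
qed (use assms in \<open>auto simp: PiE_iff ring.ring_simprules fun_eq_iff extensional_def\<close>)

lemma proj_hom:
  assumes "\<forall>i \<in> I. ring (R i)" "i \<in> I"
  shows "ring_hom_ring (PiR I R) (R i) (\<lambda>x. x i)"
  by (rule ring_hom_ringI) (use assms PiR_ring[OF assms(1)] in auto)

lemma eval_hom:
  assumes hh: "ring_hom_ring A B h" and s: "s \<in> carrier A"
  shows "h (poly_eval_int A g s) = poly_eval_int B g (h s)"
proof -
  interpret ring_hom_ring A B h by fact
  have np: "h (add_pow A n x) = add_pow B n (h x)" if "x \<in> carrier A" for n :: nat and x
    using that by (induction n) (auto simp: R.add.nat_pow_Suc S.add.nat_pow_Suc)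
  have ip: "h (add_pow A k x) = add_pow B k (h x)" if "x \<in> carrier A" for k :: int and x
  proof (cases "k \<ge> 0")
    case True thus ?thesis using np that by (simp add: add_pow_int_ge)
  next
    case False thus ?thesis using np that by (simp add: add_pow_int_lt)
  qed
  have "h (poly_eval_int A g s) =
     (\<Oplus>\<^bsub>B\<^esub> k \<in> {..degree g}. h (add_pow A (coeff g k) (s [^]\<^bsub>A\<^esub> k)))"
    unfolding poly_eval_int_def using s by (subst hom_finsum') (auto simp: comp_def)
  also have "\<dots> = poly_eval_int B g (h s)"
    unfolding poly_eval_int_def using s
    by (intro S.finsum_cong') (auto simp: ip hom_nat_pow)
  finally show ?thesis .
qed


lemma eval_closed:
  assumes "ring A" "s \<in> carrier A"
  shows "poly_eval_int A g s \<in> carrier A"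
proof -
  interpret ring A by fact
  show ?thesis unfolding poly_eval_int_def
    by (rule finsum_closed) (use assms in \<open>auto simp: add.int_pow_closed\<close>)
qed

lemma eq_PiR:
  assumes "x \<in> carrier (PiR I R)" "y \<in> carrier (PiR I R)"
  shows "x = y \<longleftrightarrow> (\<forall>i\<in>I. x i = y i)"
  using assms by (auto intro: PiE_ext)

lemma eval_PiR:
  assumes R: "\<forall>i \<in> I. ring (R i)" and s: "s \<in> carrier (PiR I R)"
  shows "poly_eval_int (PiR I R) g s = \<zero>\<^bsub>PiR I R\<^esub> \<longleftrightarrow>
         (\<forall>i\<in>I. poly_eval_int (R i) g (s i) = \<zero>\<^bsub>R i\<^esub>)"
proof -
  have c: "poly_eval_int (PiR I R) g s \<in> carrier (PiR I R)"
    using eval_closed[OF PiR_ring[OF R] s] .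
  have z: "\<zero>\<^bsub>PiR I R\<^esub> \<in> carrier (PiR I R)"
    using ring.ring_simprules(2)[OF PiR_ring[OF R]] .
  have comp: "poly_eval_int (PiR I R) g s i = poly_eval_int (R i) g (s i)" if "i \<in> I" for i
    using eval_hom[OF proj_hom[OF R that] s] .
  show ?thesis using eq_PiR[OF c z] comp by auto
qed

lemma minus_PiR:
  assumes R: "\<forall>i \<in> I. ring (R i)" and i: "i \<in> I"
    and x: "x \<in> carrier (PiR I R)" and y: "y \<in> carrier (PiR I R)"
  shows "(x \<ominus>\<^bsub>PiR I R\<^esub> y) i = x i \<ominus>\<^bsub>R i\<^esub> y i"
proof -
  interpret ring_hom_ring "PiR I R" "R i" "\<lambda>x. x i" using proj_hom[OF R i] .
  have ny: "\<ominus>\<^bsub>PiR I R\<^esub> y \<in> carrier (PiR I R)" by (rule R.a_inv_closed[OF y])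
  show ?thesis unfolding a_minus_def using hom_add[OF x ny] hom_a_inv[OF y] by (simp del: PiR_simps)
qed

lemma Reg_PiR:
  assumes R: "\<forall>i \<in> I. ring (R i)"
  shows "r \<in> Reg (PiR I R) \<longleftrightarrow> r \<in> carrier (PiR I R) \<and> (\<forall>i\<in>I. r i \<in> Reg (R i))"
proof
  assume "r \<in> Reg (PiR I R)"
  then obtain y where r: "r \<in> carrier (PiR I R)" and y: "y \<in> carrier (PiR I R)"
    and e: "r = r \<otimes>\<^bsub>PiR I R\<^esub> y \<otimes>\<^bsub>PiR I R\<^esub> r" unfolding Reg_def by auto
  have "r i = r i \<otimes>\<^bsub>R i\<^esub> y i \<otimes>\<^bsub>R i\<^esub> r i" if "i \<in> I" for i
    using fun_cong[OF e, of i] that by simp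
  then show "r \<in> carrier (PiR I R) \<and> (\<forall>i\<in>I. r i \<in> Reg (R i))"
    using r y unfolding Reg_def by (auto simp: PiE_iff)
next
  assume a: "r \<in> carrier (PiR I R) \<and> (\<forall>i\<in>I. r i \<in> Reg (R i))"
  then have "\<forall>i\<in>I. \<exists>y \<in> carrier (R i). r i = r i \<otimes>\<^bsub>R i\<^esub> y \<otimes>\<^bsub>R i\<^esub> r i"
    unfolding Reg_def by auto
  then obtain f where f: "\<forall>i\<in>I. f i \<in> carrier (R i) \<and> r i = r i \<otimes>\<^bsub>R i\<^esub> f i \<otimes>\<^bsub>R i\<^esub> r i"
    by metis
  define y where "y = (\<lambda>i\<in>I. f i)"
  have y: "y \<in> carrier (PiR I R)" using f by (auto simp: y_def)
  have "r = r \<otimes>\<^bsub>PiR I R\<^esub> y \<otimes>\<^bsub>PiR I R\<^esub> r"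
    using a f by (auto simp: y_def fun_eq_iff PiE_iff extensional_def)
  then show "r \<in> Reg (PiR I R)" using a y unfolding Reg_def by auto
qed

lemma Reg_neg:
  fixes A (structure)
  assumes "ring A" "r \<in> Reg A"
  shows "\<ominus>\<^bsub>A\<^esub> r \<in> Reg A"
proof -
  interpret ring A by fact
  obtain y where r: "r \<in> carrier A" and y: "y \<in> carrier A" and e: "r = r \<otimes> y \<otimes> r"
    using assms(2) unfolding Reg_def by auto
  have "\<ominus> r = (\<ominus> r) \<otimes> (\<ominus> y) \<otimes> (\<ominus> r)"
    using r y e by (simp add: l_minus r_minus m_assoc)
  then show ?thesis using r y unfolding Reg_def by auto
qed

lemma build:
  assumes R: "\<forall>i \<in> I. ring (R i)" and x: "x \<in> carrier (PiR I R)"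
    and h: "\<forall>i\<in>I. \<exists>r\<in>Reg (R i). \<exists>s\<in>carrier (R i).
              poly_eval_int (R i) g s = \<zero>\<^bsub>R i\<^esub> \<and> (if b then x i = r \<oplus>\<^bsub>R i\<^esub> s else x i = r \<ominus>\<^bsub>R i\<^esub> s)"
  shows "weakly_g_r_clean_elem g (PiR I R) x"
proof -
  obtain fr fs where f: "\<forall>i\<in>I. fr i \<in> Reg (R i) \<and> fs i \<in> carrier (R i) \<and>
      poly_eval_int (R i) g (fs i) = \<zero>\<^bsub>R i\<^esub> \<and>
      (if b then x i = fr i \<oplus>\<^bsub>R i\<^esub> fs i else x i = fr i \<ominus>\<^bsub>R i\<^esub> fs i)"
    using h by metis
  define r where "r = (\<lambda>i\<in>I. fr i)"
  define s where "s = (\<lambda>i\<in>I. fs i)"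
  have rc: "r \<in> carrier (PiR I R)" using f by (auto simp: r_def Reg_def)
  have sc: "s \<in> carrier (PiR I R)" using f by (auto simp: s_def)
  have rR: "r \<in> Reg (PiR I R)" using Reg_PiR[OF R] rc f by (auto simp: r_def)
  have ev: "poly_eval_int (PiR I R) g s = \<zero>\<^bsub>PiR I R\<^esub>"
    using eval_PiR[OF R sc] f by (auto simp: s_def)
  have "x = r \<oplus>\<^bsub>PiR I R\<^esub> s \<or> x = r \<ominus>\<^bsub>PiR I R\<^esub> s"
  proof (cases b)
    case True
    have c: "r \<oplus>\<^bsub>PiR I R\<^esub> s \<in> carrier (PiR I R)"
      using ring.ring_simprules(1)[OF PiR_ring[OF R] rc sc] .
    have "x = r \<oplus>\<^bsub>PiR I R\<^esub> s" using eq_PiR[OF x c] f True by (auto simp: r_def s_def)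
    then show ?thesis by simp
  next
    case False
    have c: "r \<ominus>\<^bsub>PiR I R\<^esub> s \<in> carrier (PiR I R)"
      using ring.ring_simprules(4)[OF PiR_ring[OF R] rc sc] .
    have "x = r \<ominus>\<^bsub>PiR I R\<^esub> s" using eq_PiR[OF x c] f False minus_PiR[OF R _ rc sc]
      by (auto simp: r_def s_def)
    then show ?thesis by simp
  qed
  then show ?thesis unfolding weakly_g_r_clean_elem_def using rR sc ev by blast
qed


lemma neg_helper1:
  fixes A (structure)
  assumes "ring A" "b \<in> carrier A" "r \<in> carrier A" "s \<in> carrier A" "\<ominus> b = r \<ominus> s"
  shows "b = \<ominus> r \<oplus> s"
proof -
  interpret ring A by fact
  have "b = \<ominus> (\<ominus> b)" using assms(2) by simp
  also have "\<dots> = \<ominus> (r \<ominus> s)" by (simp only: assms(5))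
  also have "\<dots> = \<ominus> r \<oplus> s" using assms(3,4) by (simp add: a_minus_def minus_add)
  finally show ?thesis .
qed

lemma neg_helper2:
  fixes A (structure)
  assumes "ring A" "b \<in> carrier A" "r \<in> carrier A" "s \<in> carrier A" "\<ominus> b = r \<oplus> s"
  shows "b = \<ominus> r \<ominus> s"
proof -
  interpret ring A by fact
  have "b = \<ominus> (\<ominus> b)" using assms(2) by simp
  also have "\<dots> = \<ominus> (r \<oplus> s)" by (simp only: assms(5))
  also have "\<dots> = \<ominus> r \<ominus> s" using assms(3,4) by (simp add: a_minus_def minus_add)
  finally show ?thesis .
qed

lemma extract_comp:
  assumes R: "\<forall>i \<in> I. ring (R i)" and x: "x \<in> carrier (PiR I R)"
    and w: "weakly_g_r_clean_elem g (PiR I R) x"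
  shows "\<exists>rr ss. (\<forall>i\<in>I. rr i \<in> Reg (R i) \<and> ss i \<in> carrier (R i) \<and>
            poly_eval_int (R i) g (ss i) = \<zero>\<^bsub>R i\<^esub>) \<and>
          ((\<forall>i\<in>I. x i = rr i \<oplus>\<^bsub>R i\<^esub> ss i) \<or> (\<forall>i\<in>I. x i = rr i \<ominus>\<^bsub>R i\<^esub> ss i))"
proof -
  obtain r s where r: "r \<in> Reg (PiR I R)" and s: "s \<in> carrier (PiR I R)"
    and ev: "poly_eval_int (PiR I R) g s = \<zero>\<^bsub>PiR I R\<^esub>"
    and e: "x = r \<oplus>\<^bsub>PiR I R\<^esub> s \<or> x = r \<ominus>\<^bsub>PiR I R\<^esub> s"
    using w unfolding weakly_g_r_clean_elem_def by blast
  have rc: "r \<in> carrier (PiR I R)" using r unfolding Reg_def by auto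
  have A: "\<forall>i\<in>I. r i \<in> Reg (R i) \<and> s i \<in> carrier (R i) \<and>
            poly_eval_int (R i) g (s i) = \<zero>\<^bsub>R i\<^esub>"
    using Reg_PiR[OF R] r s eval_PiR[OF R s] ev by (auto simp: PiE_iff)
  have "(\<forall>i\<in>I. x i = r i \<oplus>\<^bsub>R i\<^esub> s i) \<or> (\<forall>i\<in>I. x i = r i \<ominus>\<^bsub>R i\<^esub> s i)"
    using e minus_PiR[OF R _ rc s] by auto
  then show ?thesis using A by blast
qed

theorem theorem3p3:
  fixes g :: "int poly" and I :: "'i set" and R :: "'i \<Rightarrow> ('a, 'b) ring_scheme"
  assumes "\<forall>i \<in> I. ring (R i)"
  shows "weakly_g_r_clean g (PiR I R) \<longleftrightarrow>
           ((\<forall>i \<in> I. weakly_g_r_clean g (R i)) \<and>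
            (\<forall>i \<in> I. \<forall>j \<in> I. \<not> g_r_clean g (R i) \<and> \<not> g_r_clean g (R j) \<longrightarrow> i = j))"
proof
  note R = assms
  have zc: "\<forall>k\<in>I. \<zero>\<^bsub>R k\<^esub> \<in> carrier (R k)" using R ring.ring_simprules(2) by blast
  assume W: "weakly_g_r_clean g (PiR I R)"
  show "(\<forall>i \<in> I. weakly_g_r_clean g (R i)) \<and>
            (\<forall>i \<in> I. \<forall>j \<in> I. \<not> g_r_clean g (R i) \<and> \<not> g_r_clean g (R j) \<longrightarrow> i = j)"
  proof (intro conjI ballI impI)
    fix i assume i: "i \<in> I"
    show "weakly_g_r_clean g (R i)" unfolding weakly_g_r_clean_def
    proof
      fix a assume a: "a \<in> carrier (R i)"
      define x where "x = (\<lambda>j\<in>I. if j = i then a else \<zero>\<^bsub>R j\<^esub>)"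
      have x: "x \<in> carrier (PiR I R)" using a zc unfolding x_def by (auto simp: PiE_iff)
      have we: "weakly_g_r_clean_elem g (PiR I R) x" using W x unfolding weakly_g_r_clean_def by blast
      obtain rr ss where A: "\<forall>i\<in>I. rr i \<in> Reg (R i) \<and> ss i \<in> carrier (R i) \<and>
            poly_eval_int (R i) g (ss i) = \<zero>\<^bsub>R i\<^esub>"
        and B: "(\<forall>i\<in>I. x i = rr i \<oplus>\<^bsub>R i\<^esub> ss i) \<or> (\<forall>i\<in>I. x i = rr i \<ominus>\<^bsub>R i\<^esub> ss i)"
        using extract_comp[OF R x we] by blast
      have xa: "x i = a" using i by (simp add: x_def)
      have Ai: "rr i \<in> Reg (R i)" "ss i \<in> carrier (R i)" "poly_eval_int (R i) g (ss i) = \<zero>\<^bsub>R i\<^esub>"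
        using A i by auto
      have "a = rr i \<oplus>\<^bsub>R i\<^esub> ss i \<or> a = rr i \<ominus>\<^bsub>R i\<^esub> ss i"
        using B i xa by blast
      then show "weakly_g_r_clean_elem g (R i) a"
        unfolding weakly_g_r_clean_elem_def using Ai by blast
    qed
  next
    fix i j assume i: "i \<in> I" and j: "j \<in> I"
      and nc: "\<not> g_r_clean g (R i) \<and> \<not> g_r_clean g (R j)"
    show "i = j"
    proof (rule ccontr)
      assume ij: "i \<noteq> j"
      obtain a where a: "a \<in> carrier (R i)" and na: "\<not> (\<exists>r \<in> Reg (R i). \<exists>s \<in> carrier (R i).
          poly_eval_int (R i) g s = \<zero>\<^bsub>R i\<^esub> \<and> a = r \<oplus>\<^bsub>R i\<^esub> s)"
        using nc unfolding g_r_clean_def by blast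
      obtain b where b: "b \<in> carrier (R j)" and nb: "\<not> (\<exists>r \<in> Reg (R j). \<exists>s \<in> carrier (R j).
          poly_eval_int (R j) g s = \<zero>\<^bsub>R j\<^esub> \<and> b = r \<oplus>\<^bsub>R j\<^esub> s)"
        using nc unfolding g_r_clean_def by blast
      define x where "x = (\<lambda>k\<in>I. if k = i then a else if k = j then \<ominus>\<^bsub>R j\<^esub> b else \<zero>\<^bsub>R k\<^esub>)"
      have rjR: "ring (R j)" using R j by blast
      have nbc: "\<ominus>\<^bsub>R j\<^esub> b \<in> carrier (R j)" by (rule ring.ring_simprules(3)[OF rjR b])
      have x: "x \<in> carrier (PiR I R)" using a nbc zc unfolding x_def by (auto simp: PiE_iff)
      have we: "weakly_g_r_clean_elem g (PiR I R) x" using W x unfolding weakly_g_r_clean_def by blast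
      obtain rr ss where A: "\<forall>i\<in>I. rr i \<in> Reg (R i) \<and> ss i \<in> carrier (R i) \<and>
            poly_eval_int (R i) g (ss i) = \<zero>\<^bsub>R i\<^esub>"
        and B: "(\<forall>i\<in>I. x i = rr i \<oplus>\<^bsub>R i\<^esub> ss i) \<or> (\<forall>i\<in>I. x i = rr i \<ominus>\<^bsub>R i\<^esub> ss i)"
        using extract_comp[OF R x we] by blast
      have xi: "x i = a" using i by (simp add: x_def)
      have ji: "(j = i) = False" using ij by blast
      have xj: "x j = \<ominus>\<^bsub>R j\<^esub> b" unfolding x_def restrict_apply' [OF j] ji if_False by simp
      show False
      proof (cases "\<forall>i\<in>I. x i = rr i \<oplus>\<^bsub>R i\<^esub> ss i")
        case True
        then have "a = rr i \<oplus>\<^bsub>R i\<^esub> ss i" using i xi by simp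
        moreover have "rr i \<in> Reg (R i)" "ss i \<in> carrier (R i)" "poly_eval_int (R i) g (ss i) = \<zero>\<^bsub>R i\<^esub>"
          using A i by auto
        ultimately show False using na by blast
      next
        case False
        then have "\<forall>i\<in>I. x i = rr i \<ominus>\<^bsub>R i\<^esub> ss i" using B by blast
        then have e: "\<ominus>\<^bsub>R j\<^esub> b = rr j \<ominus>\<^bsub>R j\<^esub> ss j" using j xj by metis
        have rj: "rr j \<in> carrier (R j)" using A j unfolding Reg_def by auto
        have sj: "ss j \<in> carrier (R j)" using A j by blast
        have "b = \<ominus>\<^bsub>R j\<^esub> rr j \<oplus>\<^bsub>R j\<^esub> ss j"
          using neg_helper1[OF rjR b rj sj e] .
        moreover have "\<ominus>\<^bsub>R j\<^esub> rr j \<in> Reg (R j)" using Reg_neg[OF rjR] A j by blast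
        moreover have "poly_eval_int (R j) g (ss j) = \<zero>\<^bsub>R j\<^esub>" using A j by blast
        ultimately show False using nb sj by blast
      qed
    qed
  qed
next
  note R = assms
  assume H: "(\<forall>i \<in> I. weakly_g_r_clean g (R i)) \<and>
            (\<forall>i \<in> I. \<forall>j \<in> I. \<not> g_r_clean g (R i) \<and> \<not> g_r_clean g (R j) \<longrightarrow> i = j)"
  show "weakly_g_r_clean g (PiR I R)" unfolding weakly_g_r_clean_def
  proof
    fix x assume x: "x \<in> carrier (PiR I R)"
    have xi: "x i \<in> carrier (R i)" if "i \<in> I" for i using x that by auto
    show "weakly_g_r_clean_elem g (PiR I R) x"
    proof (cases "\<forall>i\<in>I. g_r_clean g (R i)")
      case True
      show ?thesis
        by (rule build[OF R x, where b=True]) (use True xi in \<open>simp add: g_r_clean_def\<close>)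
    next
      case False
      then obtain i0 where i0: "i0 \<in> I" and nc: "\<not> g_r_clean g (R i0)" by blast
      have cl: "g_r_clean g (R i)" if "i \<in> I" "i \<noteq> i0" for i
        using H that i0 nc by blast
      obtain r0 s0 where r0: "r0 \<in> Reg (R i0)" and s0: "s0 \<in> carrier (R i0)"
        and ev0: "poly_eval_int (R i0) g s0 = \<zero>\<^bsub>R i0\<^esub>"
        and e0: "x i0 = r0 \<oplus>\<^bsub>R i0\<^esub> s0 \<or> x i0 = r0 \<ominus>\<^bsub>R i0\<^esub> s0"
        using H i0 xi[OF i0] unfolding weakly_g_r_clean_def weakly_g_r_clean_elem_def by blast
      show ?thesis
      proof (cases "x i0 = r0 \<oplus>\<^bsub>R i0\<^esub> s0")
        case True
        show ?thesis
        proof (rule build[OF R x, where b=True], intro ballI)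
          fix i assume i: "i \<in> I"
          show "\<exists>r\<in>Reg (R i). \<exists>s\<in>carrier (R i). poly_eval_int (R i) g s = \<zero>\<^bsub>R i\<^esub> \<and>
             (if True then x i = r \<oplus>\<^bsub>R i\<^esub> s else x i = r \<ominus>\<^bsub>R i\<^esub> s)"
          proof (cases "i = i0")
            case True
            then show ?thesis using r0 s0 ev0 \<open>x i0 = r0 \<oplus>\<^bsub>R i0\<^esub> s0\<close> by auto
          next
            case False
            then show ?thesis using cl[OF i False] xi[OF i] unfolding g_r_clean_def by simp
          qed
        qed
      next
        case False
        then have m: "x i0 = r0 \<ominus>\<^bsub>R i0\<^esub> s0" using e0 by blast
        show ?thesis
        proof (rule build[OF R x, where b=False], intro ballI)
          fix i assume i: "i \<in> I"
          show "\<exists>r\<in>Reg (R i). \<exists>s\<in>carrier (R i). poly_eval_int (R i) g s = \<zero>\<^bsub>R i\<^esub> \<and>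
             (if False then x i = r \<oplus>\<^bsub>R i\<^esub> s else x i = r \<ominus>\<^bsub>R i\<^esub> s)"
          proof (cases "i = i0")
            case True
            then show ?thesis using r0 s0 ev0 m by auto
          next
            case False
            have ri: "ring (R i)" using R i by blast
            have "\<ominus>\<^bsub>R i\<^esub> x i \<in> carrier (R i)" by (rule ring.ring_simprules(3)[OF ri xi[OF i]])
            then obtain r s where r: "r \<in> Reg (R i)" and s: "s \<in> carrier (R i)"
              and ev: "poly_eval_int (R i) g s = \<zero>\<^bsub>R i\<^esub>"
              and e: "\<ominus>\<^bsub>R i\<^esub> x i = r \<oplus>\<^bsub>R i\<^esub> s"
              using cl[OF i False] unfolding g_r_clean_def by blast
            have rc: "r \<in> carrier (R i)" using r unfolding Reg_def by auto
            have "x i = \<ominus>\<^bsub>R i\<^esub> r \<ominus>\<^bsub>R i\<^esub> s" using neg_helper2[OF ri xi[OF i] rc s e] .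
            moreover have "\<ominus>\<^bsub>R i\<^esub> r \<in> Reg (R i)" using Reg_neg[OF ri r] .
            ultimately show ?thesis using s ev by auto
          qed
        qed
      qed
    qed
  qed
qed

end
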